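(* Let $a=(a_j)_{j\in\mathbb Z}\subset\mathbb R$ be such that $$\lim_{k\to\infty}\frac1k\sum_{j=0}^{k-1}a_j=\lim_{k\to\infty}\frac1k\sum_{j=-1}^{-k}a_j=\bar a.$$ For $n\in\mathbb N$ let $p^{(n)}=(p^{(n)}_j)_{j\in\mathbb Z}$ be the density of a probability distribution on $\mathbb Z$, with expectation denoted $\mathcal E_n$, such that (i) $j\mapsto p^{(n)}_j$ is increasing on $\mathbb Z^-$ and decreasing on $\mathbb Z_0^+$; (ii) for all $r\in\mathbb N$, $\mathcal E_n(1_{[-r,r]})=\sum_{j=-r}^rp^{(n)}_j\to0$ as $n\to\infty$. Then $$\lim_{n\to\infty}\mathcal E_n(a)=\lim_{n\to\infty}\sum_{j\in\mathbb Z}p^{(n)}_ja_j=\bar a.$$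
   Context: $\mathbb Z^-$ denotes the negative integers and $\mathbb Z_0^+$ the non-negative integers; monotonicity in (i) is in the weak sense. *)

theory Defs
  imports "HOL-Analysis.Analysis"
begin

definition zsum :: "(int \<Rightarrow> real) \<Rightarrow> real" where
  "zsum f = (\<Sum>j. f (int j)) + (\<Sum>j. f (- int j - 1))"

end

theory Submission
  imports Defs
begin

lemma nq_lim:
  fixes q :: "nat \<Rightarrow> real"
  assumes anti: "\<And>i j. i \<le> j \<Longrightarrow> q j \<le> q i" and nn: "\<And>j. q j \<ge> 0"
    and sm: "summable q"
  shows "(\<lambda>N. real N * q N) \<longlonglongrightarrow> 0"
proof -
  define S where "S N = (\<Sum>j<N. q j)" for N
  have S: "S \<longlonglongrightarrow> suminf q" unfolding S_def using sm summable_LIMSEQ by blast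
  have S2: "(\<lambda>N. S (N div 2)) \<longlonglongrightarrow> suminf q"
  proof (rule LIMSEQ_I)
    fix r :: real assume "r > 0"
    then obtain no where no: "\<And>n. n \<ge> no \<Longrightarrow> norm (S n - suminf q) < r"
      using LIMSEQ_D[OF S] by blast
    show "\<exists>no. \<forall>n\<ge>no. norm (S (n div 2) - suminf q) < r"
    proof (intro exI allI impI)
      fix n assume "2*no \<le> n" hence "no \<le> n div 2" by auto
      thus "norm (S (n div 2) - suminf q) < r" using no by blast
    qed
  qed
  have D: "(\<lambda>N. 2 * (S N - S (N div 2))) \<longlonglongrightarrow> 0"
    using tendsto_mult[OF tendsto_const[of 2] tendsto_diff[OF S S2]] by simp
  have bnd: "\<bar>real N * q N\<bar> \<le> 2 * (S N - S (N div 2))" for N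
  proof -
    have "S N - S (N div 2) = (\<Sum>j\<in>{N div 2..<N}. q j)"
      unfolding S_def using sum.atLeastLessThan_concat[of 0 "N div 2" N q] by (simp add: atLeast0LessThan)
    also have "\<dots> \<ge> (\<Sum>j\<in>{N div 2..<N}. q N)"
      by (rule sum_mono) (auto intro: anti)
    finally have "real (N - N div 2) * q N \<le> S N - S (N div 2)" by simp
    moreover have "real N \<le> 2 * real (N - N div 2)" by linarith
    ultimately show ?thesis
    proof -
      assume A: "real (N - N div 2) * q N \<le> S N - S (N div 2)" and B: "real N \<le> 2 * real (N - N div 2)"
      have "real N * q N \<le> (2 * real (N - N div 2)) * q N" by (rule mult_right_mono[OF B nn])
      hence "\<bar>real N * q N\<bar> \<le> 2 * real (N - N div 2) * q N" using nn[of N] by simp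
      also have "\<dots> = 2 * (real (N - N div 2) * q N)" by simp
      also have "\<dots> \<le> 2 * (S N - S (N div 2))" using A by simp
      finally show ?thesis .
    qed
  qed
  show ?thesis
    by (rule Lim_null_comparison[OF _ D]) (use bnd in \<open>auto\<close>)
qed

lemma cesaro_bound:
  fixes T :: "nat \<Rightarrow> real"
  assumes lim: "(\<lambda>k. T k / real k) \<longlonglongrightarrow> c" and e: "\<epsilon> > 0"
  shows "\<exists>M. \<forall>j. \<bar>T j - c * real j\<bar> \<le> M + \<epsilon> * real j"
proof -
  obtain N where N: "\<And>k. k \<ge> N \<Longrightarrow> norm (T k / real k - c) < \<epsilon>"
    using LIMSEQ_D[OF lim e] by blast
  define M where "M = (\<Sum>j<N+1. \<bar>T j - c * real j\<bar>)"
  have "\<bar>T j - c * real j\<bar> \<le> M + \<epsilon> * real j" for j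
  proof (cases "j < N + 1")
    case True
    hence "\<bar>T j - c * real j\<bar> \<le> M" unfolding M_def
      by (intro member_le_sum) auto
    moreover have "\<epsilon> * real j \<ge> 0" using e by simp
    ultimately show ?thesis by linarith
  next
    case False
    hence j: "j \<ge> N" "j > 0" by auto
    have "\<bar>T j / real j - c\<bar> < \<epsilon>" using N[OF j(1)] by simp
    hence "\<bar>T j / real j - c\<bar> * real j \<le> \<epsilon> * real j" using j(2)
      by (intro mult_right_mono) auto
    moreover have "\<bar>T j / real j - c\<bar> * real j = \<bar>T j - c * real j\<bar>"
    proof -
      have "(T j / real j - c) * real j = T j - c * real j" using j(2) by (simp add: field_simps)
      thus ?thesis by (metis abs_mult abs_of_nat)
    qed
    moreover have "M \<ge> 0" unfolding M_def by (intro sum_nonneg) auto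
    ultimately show ?thesis by linarith
  qed
  thus ?thesis by blast
qed

lemma abel_id:
  fixes q b :: "nat \<Rightarrow> real"
  shows "(\<Sum>j<N. q j * b j) = (\<Sum>i<N. (q i - q (Suc i)) * (\<Sum>k<Suc i. b k)) + q N * (\<Sum>k<N. b k)"
  by (induction N) (auto simp: algebra_simps)

lemma weight_id:
  fixes q :: "nat \<Rightarrow> real"
  shows "(\<Sum>i<N. (q i - q (Suc i)) * real (Suc i)) = (\<Sum>i<N. q i) - real N * q N"
  by (induction N) (auto simp: algebra_simps)

lemma one_sided:
  fixes q b :: "nat \<Rightarrow> real"
  assumes anti: "\<And>i j. i \<le> j \<Longrightarrow> q j \<le> q i" and nn: "\<And>j. q j \<ge> 0"
    and sm: "summable q"
    and Tb: "\<And>j. \<bar>(\<Sum>i<j. b i) - c * real j\<bar> \<le> M + E * real j"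
  shows "summable (\<lambda>j. q j * b j) \<and>
         \<bar>(\<Sum>j. q j * b j) - c * suminf q\<bar> \<le> M * q 0 + E * suminf q"
proof -
  define b' where "b' j = b j - c" for j
  define T where "T k = (\<Sum>i<k. b' i)" for k
  have T: "\<bar>T k\<bar> \<le> M + E * real k" for k
    using Tb[of k] unfolding T_def b'_def by (simp add: sum_subtractf mult.commute)
  define u where "u i = (q i - q (Suc i)) * T (Suc i)" for i
  define w where "w i = (q i - q (Suc i)) * (M + E * real (Suc i))" for i
  have qd: "q i - q (Suc i) \<ge> 0" for i using anti[of i "Suc i"] by simp
  have uw: "norm (u i) \<le> w i" for i
    unfolding u_def w_def real_norm_def abs_mult using qd[of i] T[of "Suc i"]
    by (simp add: mult_left_mono)
  have q0: "q \<longlonglongrightarrow> 0" using sm summable_LIMSEQ_zero by blast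
  have nq: "(\<lambda>N. real N * q N) \<longlonglongrightarrow> 0" using nq_lim anti nn sm by blast
  have wsum: "(\<Sum>i<N. w i) = M * (q 0 - q N) + E * ((\<Sum>i<N. q i) - real N * q N)" for N
  proof -
    have "(\<Sum>i<N. w i) = M * (\<Sum>i<N. q i - q (Suc i)) + E * (\<Sum>i<N. (q i - q (Suc i)) * real (Suc i))"
    proof -
      have "(\<Sum>i<N. w i) = (\<Sum>i<N. M * (q i - q (Suc i)) + E * ((q i - q (Suc i)) * real (Suc i)))"
        unfolding w_def by (intro sum.cong) (auto simp: algebra_simps)
      also have "\<dots> = M * (\<Sum>i<N. q i - q (Suc i)) + E * (\<Sum>i<N. (q i - q (Suc i)) * real (Suc i))"
        by (simp only: sum.distrib sum_distrib_left)
      finally show ?thesis .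
    qed
    also have "(\<Sum>i<N. q i - q (Suc i)) = q 0 - q N" by (rule sum_lessThan_telescope')
    also note weight_id
    finally show ?thesis .
  qed
  have "(\<lambda>N. \<Sum>i<N. w i) \<longlonglongrightarrow> M * (q 0 - 0) + E * (suminf q - 0)"
    unfolding wsum
    by (intro tendsto_intros q0 nq summable_LIMSEQ sm)
  hence ws: "w sums (M * q 0 + E * suminf q)" by (simp add: sums_def)
  have us: "summable u" by (rule summable_comparison_test[OF _ sums_summable[OF ws]]) (use uw in auto)
  have nus: "summable (\<lambda>i. norm (u i))"
    by (rule summable_comparison_test[OF _ sums_summable[OF ws]]) (use uw in auto)
  have "norm (suminf u) \<le> (\<Sum>i. norm (u i))" by (rule summable_norm[OF nus])
  also have "\<dots> \<le> suminf w" by (rule suminf_le[OF uw nus sums_summable[OF ws]])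
  also have "\<dots> = M * q 0 + E * suminf q" by (rule sums_unique[OF ws, symmetric])
  finally have ule: "\<bar>suminf u\<bar> \<le> M * q 0 + E * suminf q" by simp
  have qT: "(\<lambda>N. q N * T N) \<longlonglongrightarrow> 0"
  proof (rule Lim_null_comparison[of _ "\<lambda>N. M * q N + E * (real N * q N)"])
    have "norm (q N * T N) \<le> M * q N + E * (real N * q N)" for N
    proof -
      have "norm (q N * T N) = q N * \<bar>T N\<bar>" using nn[of N] by (simp add: abs_mult)
      also have "\<dots> \<le> q N * (M + E * real N)" by (rule mult_left_mono[OF T nn])
      also have "\<dots> = M * q N + E * (real N * q N)" by (simp add: algebra_simps)
      finally show ?thesis .
    qed
    thus "\<forall>\<^sub>F N in sequentially. norm (q N * T N) \<le> M * q N + E * (real N * q N)"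
      by (intro always_eventually) auto
    show "(\<lambda>N. M * q N + E * (real N * q N)) \<longlonglongrightarrow> 0"
      using tendsto_add[OF tendsto_mult[OF tendsto_const[of M] q0] tendsto_mult[OF tendsto_const[of E] nq]]
      by simp
  qed
  have "(\<lambda>N. \<Sum>j<N. q j * b' j) \<longlonglongrightarrow> suminf u + 0"
  proof -
    have "(\<Sum>j<N. q j * b' j) = (\<Sum>i<N. u i) + q N * T N" for N
      unfolding u_def T_def by (rule abel_id)
    thus ?thesis using tendsto_add[OF summable_LIMSEQ[OF us] qT] by simp
  qed
  hence s1: "(\<lambda>j. q j * b' j) sums suminf u" by (simp add: sums_def)
  have s2: "(\<lambda>j. c * q j) sums (c * suminf q)" using sm summable_sums sums_mult by blast
  have "(\<lambda>j. q j * b' j + c * q j) sums (suminf u + c * suminf q)" using sums_add[OF s1 s2] .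
  moreover have "(\<lambda>j. q j * b' j + c * q j) = (\<lambda>j. q j * b j)"
    unfolding b'_def by (auto simp: algebra_simps)
  ultimately have "(\<lambda>j. q j * b j) sums (suminf u + c * suminf q)" by simp
  thus ?thesis using ule sums_summable sums_unique by (metis add_diff_cancel_right')
qed

lemma split_prob:
  fixes f :: "int \<Rightarrow> real"
  assumes "(f has_sum 1) UNIV"
  shows "(\<lambda>j. f (int j)) sums infsum f (range int)"
    and "(\<lambda>j. f (- int j - 1)) sums infsum f (range (\<lambda>j::nat. - int j - 1))"
    and "infsum f (range int) + infsum f (range (\<lambda>j::nat. - int j - 1)) = 1"
proof -
  have su: "f summable_on UNIV" using assms has_sum_imp_summable by blast
  have s1: "f summable_on range int" by (rule summable_on_subset_banach[OF su]) auto
  have s2: "f summable_on range (\<lambda>j::nat. - int j - 1)" by (rule summable_on_subset_banach[OF su]) auto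
  have i1: "inj (int)" by (auto simp: inj_def)
  have i2: "inj (\<lambda>j::nat. - int j - 1)" by (auto simp: inj_def)
  have "((f \<circ> int) has_sum infsum f (range int)) UNIV"
    using has_sum_reindex[OF i1] s1 has_sum_infsum by blast
  thus "(\<lambda>j. f (int j)) sums infsum f (range int)"
    using has_sum_imp_sums by (simp add: o_def)
  have "((f \<circ> (\<lambda>j::nat. - int j - 1)) has_sum infsum f (range (\<lambda>j::nat. - int j - 1))) UNIV"
    using has_sum_reindex[OF i2] s2 has_sum_infsum by blast
  thus "(\<lambda>j. f (- int j - 1)) sums infsum f (range (\<lambda>j::nat. - int j - 1))"
    using has_sum_imp_sums by (simp add: o_def)
  have U: "(UNIV::int set) = range int \<union> range (\<lambda>j::nat. - int j - 1)"
  proof -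
    have "x \<in> range int \<union> range (\<lambda>j::nat. - int j - 1)" for x :: int
    proof (cases "x \<ge> 0")
      case True
      hence "x = int (nat x)" by simp
      thus ?thesis by blast
    next
      case False
      hence "x = - int (nat (- x - 1)) - 1" by simp
      thus ?thesis by blast
    qed
    thus ?thesis by blast
  qed
  have D: "range int \<inter> range (\<lambda>j::nat. - int j - 1) = {}" by auto
  have "infsum f UNIV = 1" using assms infsumI by blast
  thus "infsum f (range int) + infsum f (range (\<lambda>j::nat. - int j - 1)) = 1"
    using infsum_Un_disjoint[OF s1 s2 D] U by simp
qed

theorem lemmaA5:
  fixes a :: "int \<Rightarrow> real" and abar :: real and p :: "nat \<Rightarrow> int \<Rightarrow> real"
  assumes avg_pos: "(\<lambda>k. (\<Sum>j<k. a (int j)) / real k) \<longlonglongrightarrow> abar"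
      and avg_neg: "(\<lambda>k. (\<Sum>j<k. a (- int j - 1)) / real k) \<longlonglongrightarrow> abar"
      and nonneg: "\<And>n j. p n j \<ge> 0"
      and prob: "\<And>n. (p n has_sum 1) UNIV"
      and incr_neg: "\<And>n i j. i \<le> j \<Longrightarrow> j < 0 \<Longrightarrow> p n i \<le> p n j"
      and decr_pos: "\<And>n i j. 0 \<le> i \<Longrightarrow> i \<le> j \<Longrightarrow> p n j \<le> p n i"
      and vanish: "\<And>r::nat. (\<lambda>n. \<Sum>j\<in>{- int r..int r}. p n j) \<longlonglongrightarrow> 0"
  shows "(\<forall>n. summable (\<lambda>j. p n (int j) * a (int j))
              \<and> summable (\<lambda>j. p n (- int j - 1) * a (- int j - 1)))
         \<and> (\<lambda>n. zsum (\<lambda>j. p n j * a j)) \<longlonglongrightarrow> abar"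
proof -
  define Pp where "Pp n = infsum (p n) (range int)" for n
  define Pm where "Pm n = infsum (p n) (range (\<lambda>j::nat. - int j - 1))" for n
  have sp: "(\<lambda>j. p n (int j)) sums Pp n" for n unfolding Pp_def by (rule split_prob(1)[OF prob])
  have sm: "(\<lambda>j. p n (- int j - 1)) sums Pm n" for n unfolding Pm_def by (rule split_prob(2)[OF prob])
  have P1: "Pp n + Pm n = 1" for n unfolding Pp_def Pm_def by (rule split_prob(3)[OF prob])
  have ap: "\<And>i j. i \<le> j \<Longrightarrow> p n (int j) \<le> p n (int i)" for n by (rule decr_pos) auto
  have am: "\<And>i j. i \<le> j \<Longrightarrow> p n (- int j - 1) \<le> p n (- int i - 1)" for n by (rule incr_neg) auto
  have key: "summable (\<lambda>j. p n (int j) * a (int j)) \<and>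
      \<bar>(\<Sum>j. p n (int j) * a (int j)) - abar * Pp n\<bar> \<le> Mp * p n 0 + e * Pp n
    \<and> summable (\<lambda>j. p n (- int j - 1) * a (- int j - 1)) \<and>
      \<bar>(\<Sum>j. p n (- int j - 1) * a (- int j - 1)) - abar * Pm n\<bar> \<le> Mm * p n (-1) + e * Pm n"
    if Mp: "\<And>j. \<bar>(\<Sum>i<j. a (int i)) - abar * real j\<bar> \<le> Mp + e * real j"
    and Mm: "\<And>j. \<bar>(\<Sum>i<j. a (- int i - 1)) - abar * real j\<bar> \<le> Mm + e * real j"
    for n Mp Mm e
  proof -
    have e1: "suminf (\<lambda>j. p n (int j)) = Pp n" using sums_unique[OF sp] by simp
    have e2: "suminf (\<lambda>j. p n (- int j - 1)) = Pm n" using sums_unique[OF sm] by simp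
    have 1: "summable (\<lambda>j. p n (int j) * a (int j)) \<and>
      \<bar>(\<Sum>j. p n (int j) * a (int j)) - abar * suminf (\<lambda>j. p n (int j))\<bar>
        \<le> Mp * p n (int 0) + e * suminf (\<lambda>j. p n (int j))"
      apply (rule one_sided[where q="\<lambda>j. p n (int j)" and b="\<lambda>j. a (int j)"])
      apply (rule ap, assumption)
      apply (rule nonneg)
      apply (rule sums_summable[OF sp])
      apply (rule Mp)
      done
    have 2: "summable (\<lambda>j. p n (- int j - 1) * a (- int j - 1)) \<and>
      \<bar>(\<Sum>j. p n (- int j - 1) * a (- int j - 1)) - abar * suminf (\<lambda>j. p n (- int j - 1))\<bar>
        \<le> Mm * p n (- int 0 - 1) + e * suminf (\<lambda>j. p n (- int j - 1))"
      apply (rule one_sided[where q="\<lambda>j. p n (- int j - 1)" and b="\<lambda>j. a (- int j - 1)"])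
      apply (rule am, assumption)
      apply (rule nonneg)
      apply (rule sums_summable[OF sm])
      apply (rule Mm)
      done
    show ?thesis using 1 2 unfolding e1 e2 by simp
  qed
  obtain M1 where M1: "\<And>j. \<bar>(\<Sum>i<j. a (int i)) - abar * real j\<bar> \<le> M1 + 1 * real j"
    using cesaro_bound[OF avg_pos zero_less_one] by blast
  obtain M2 where M2: "\<And>j. \<bar>(\<Sum>i<j. a (- int i - 1)) - abar * real j\<bar> \<le> M2 + 1 * real j"
    using cesaro_bound[OF avg_neg zero_less_one] by blast
  have part1: "\<forall>n. summable (\<lambda>j. p n (int j) * a (int j))
              \<and> summable (\<lambda>j. p n (- int j - 1) * a (- int j - 1))"
    using key[OF M1 M2] by blast
  have v1: "(\<lambda>n. \<Sum>j\<in>{- 1..1::int}. p n j) \<longlonglongrightarrow> 0" using vanish[of 1] by simp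
  have le0: "p n 0 \<le> (\<Sum>j\<in>{- 1..1::int}. p n j)" for n
    by (rule member_le_sum) (auto intro: nonneg)
  have le1: "p n (-1) \<le> (\<Sum>j\<in>{- 1..1::int}. p n j)" for n
    by (rule member_le_sum) (auto intro: nonneg)
  have p0: "(\<lambda>n. p n 0) \<longlonglongrightarrow> 0"
    by (rule Lim_null_comparison[OF _ v1]) (use le0 nonneg in auto)
  have p1: "(\<lambda>n. p n (-1)) \<longlonglongrightarrow> 0"
    by (rule Lim_null_comparison[OF _ v1]) (use le1 nonneg in auto)
  have part2: "(\<lambda>n. zsum (\<lambda>j. p n j * a j)) \<longlonglongrightarrow> abar"
  proof (rule LIMSEQ_I)
    fix r :: real assume r: "r > 0"
    define e where "e = r / 2"
    have e: "e > 0" using r by (simp add: e_def)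
    obtain Mp where Mp: "\<And>j. \<bar>(\<Sum>i<j. a (int i)) - abar * real j\<bar> \<le> Mp + e * real j"
      using cesaro_bound[OF avg_pos e] by blast
    obtain Mm where Mm: "\<And>j. \<bar>(\<Sum>i<j. a (- int i - 1)) - abar * real j\<bar> \<le> Mm + e * real j"
      using cesaro_bound[OF avg_neg e] by blast
    have l1: "(\<lambda>n. Mp * p n 0) \<longlonglongrightarrow> 0" using tendsto_mult[OF tendsto_const[of Mp] p0] by simp
    have l2: "(\<lambda>n. Mm * p n (-1)) \<longlonglongrightarrow> 0" using tendsto_mult[OF tendsto_const[of Mm] p1] by simp
    have lim: "(\<lambda>n. Mp * p n 0 + Mm * p n (-1)) \<longlonglongrightarrow> 0" by (rule tendsto_add_zero[OF l1 l2])
    obtain no where no: "\<And>n. n \<ge> no \<Longrightarrow> norm (Mp * p n 0 + Mm * p n (-1)) < e"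
    proof -
      have "\<exists>no. \<forall>n\<ge>no. norm ((Mp * p n 0 + Mm * p n (-1)) - 0) < e" by (rule LIMSEQ_D[OF lim e])
      hence "\<exists>no. \<forall>n\<ge>no. norm (Mp * p n 0 + Mm * p n (-1)) < e" by (simp only: diff_zero)
      thus ?thesis using that by blast
    qed
    show "\<exists>no. \<forall>n\<ge>no. norm (zsum (\<lambda>j. p n j * a j) - abar) < r"
    proof (intro exI allI impI)
      fix n assume n: "n \<ge> no"
      define U where "U = (\<Sum>j. p n (int j) * a (int j)) - abar * Pp n"
      define V where "V = (\<Sum>j. p n (- int j - 1) * a (- int j - 1)) - abar * Pm n"
      define A where "A = Mp * p n 0"
      define B where "B = Mm * p n (-1)"
      have KK: "summable (\<lambda>j. p n (int j) * a (int j)) \<and> \<bar>U\<bar> \<le> A + e * Pp n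
        \<and> summable (\<lambda>j. p n (- int j - 1) * a (- int j - 1)) \<and> \<bar>V\<bar> \<le> B + e * Pm n"
        unfolding U_def V_def A_def B_def by (rule key[OF Mp Mm])
      have K1: "\<bar>U\<bar> \<le> A + e * Pp n" using KK by blast
      have K2: "\<bar>V\<bar> \<le> B + e * Pm n" using KK by blast
      have ab: "abar = abar * Pp n + abar * Pm n" using P1[of n] by (metis distrib_left mult.right_neutral)
      have ee: "e * Pp n + e * Pm n = e" using P1[of n] by (metis distrib_left mult.right_neutral)
      have zs: "zsum (\<lambda>j. p n j * a j) - abar = U + V"
        unfolding zsum_def U_def V_def using ab by simp
      have tri: "\<bar>U + V\<bar> \<le> \<bar>U\<bar> + \<bar>V\<bar>" by (rule abs_triangle_ineq)
      have nAB: "\<bar>A + B\<bar> < e" using no[OF n] unfolding A_def B_def by simp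
      have AB: "A + B < e" by (rule le_less_trans[OF abs_ge_self nAB])
      have "\<bar>U + V\<bar> \<le> \<bar>U\<bar> + \<bar>V\<bar>" by (rule tri)
      also have "\<dots> \<le> (A + e * Pp n) + (B + e * Pm n)" by (rule add_mono[OF K1 K2])
      also have "\<dots> = (A + B) + (e * Pp n + e * Pm n)" by (simp add: algebra_simps)
      also have "\<dots> = (A + B) + e" by (simp only: ee)
      also have "\<dots> < e + e" using AB by simp
      also have "e + e = r" by (simp add: e_def)
      finally have "\<bar>U + V\<bar> < r" .
      thus "norm (zsum (\<lambda>j. p n j * a j) - abar) < r" using zs by simp
    qed
  qed
  show ?thesis using part1 part2 by blast
qed

end
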